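(* Let $H$ be a real Hilbert space, let $D\subseteq H$ be a nonempty closed convex set, and let $T_1,\dots,T_m:D\to D$ be firmly nonexpansive operators with $F:=\bigcap_{i=1}^m\mathrm{Fix}(T_i)\neq\emptyset$. Let $\mathcal{M}'$ be a finite nonempty subset of $\mathcal{M}$, enumerated as $S_1,\dots,S_N$ with $N=|\mathcal{M}'|$ and $S_r=(\Omega_r,w_r)$. Let $j(k)=(k \bmod N)+1$ for $k\ge0$, let $(\lambda_k)_{k\in\mathbb{N}}$ be a steering sequence, and let $u,x^0\in D$. Then the sequence defined by $$x^{k+1}=\lambda_k u+(1-\lambda_k)\sum_{t\in\Omega_{j(k)}}w_{j(k)}(t)T[t](x^k),\quad k\ge0,$$ converges strongly to $P_F(u)$.
   Context: An operator $T:D\to H$ is firmly nonexpansive if $\|T(x)-T(y)\|^2\le\langle x-y,T(x)-T(y)\rangle$ for all $x,y\in D$. $\mathrm{Fix}(T)=\{x\in D: T(x)=x\}$; $P_F$ is the metric projection onto $F$. An index vector is a finite tuple $t=(t_1,\dots,t_q)$ with each $t_\ell\in\{1,\dots,m\}$; the string operator is $T[t]:=T_{t_q}T_{t_{q-1}}\cdots T_{t_1}$. A finite set $\Omega$ of index vectors is fit if every $i\in\{1,\dots,m\}$ appears as a component of some $t\in\Omega$. $\mathcal{M}$ denotes the collection of all pairs $(\Omega,w)$ where $\Omega$ is a fit finite set of index vectors and $w:\Omega\to(0,1]$ satisfies $\sum_{t\in\Omega}w(t)=1$. A steering sequence is a real sequence $(\lambda_k)_{k\in\mathbb{N}}$ with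 $\lambda_k\in[0,1]$ for all $k$, $\lim_{k\to\infty}\lambda_k=0$, $\sum_{k=0}^\infty\lambda_k=+\infty$, and $\sum_{k=0}^\infty|\lambda_{k+1}-\lambda_k|<\infty$. *)

theory Defs
  imports "HOL-Analysis.Analysis"
begin

definition firmly_nonexpansive_on :: "'a::real_inner set \<Rightarrow> ('a \<Rightarrow> 'a) \<Rightarrow> bool" where
  "firmly_nonexpansive_on D T \<longleftrightarrow>
     (\<forall>x\<in>D. \<forall>y\<in>D. (norm (T x - T y))\<^sup>2 \<le> inner (x - y) (T x - T y))"

definition Fix :: "'a set \<Rightarrow> ('a \<Rightarrow> 'a) \<Rightarrow> 'a set" where
  "Fix D T = {x\<in>D. T x = x}"

text \<open>Metric projection onto F (a nearest point; unique and existing for F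
  nonempty closed convex in a Hilbert space). Same as the library's closest_point,
  which however is restricted to heine_borel spaces.\<close>
definition metric_proj :: "'a::real_inner set \<Rightarrow> 'a \<Rightarrow> 'a" where
  "metric_proj F a = (SOME x. x \<in> F \<and> (\<forall>y\<in>F. dist a x \<le> dist a y))"

text \<open>Index vectors are lists t = [t_1,...,t_q] (q \<ge> 1) with entries in {1..m}.
  String operator T[t] = T_{t_q} \<circ> ... \<circ> T_{t_1}: T_{t_1} is applied first.\<close>
definition index_vector :: "nat \<Rightarrow> nat list \<Rightarrow> bool" where
  "index_vector m t \<longleftrightarrow> t \<noteq> [] \<and> set t \<subseteq> {1..m}"

definition string_op :: "(nat \<Rightarrow> 'a \<Rightarrow> 'a) \<Rightarrow> nat list \<Rightarrow> 'a \<Rightarrow> 'a" where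
  "string_op T t x = fold (\<lambda>i y. T i y) t x"

definition fit :: "nat \<Rightarrow> nat list set \<Rightarrow> bool" where
  "fit m \<Omega> \<longleftrightarrow> finite \<Omega> \<and> (\<forall>t\<in>\<Omega>. index_vector m t) \<and> (\<forall>i\<in>{1..m}. \<exists>t\<in>\<Omega>. i \<in> set t)"

definition calM :: "nat \<Rightarrow> (nat list set \<times> (nat list \<Rightarrow> real)) set" where
  "calM m = {(\<Omega>, w). fit m \<Omega> \<and> (\<forall>t\<in>\<Omega>. 0 < w t \<and> w t \<le> 1) \<and> (\<Sum>t\<in>\<Omega>. w t) = 1}"

definition steering_sequence :: "(nat \<Rightarrow> real) \<Rightarrow> bool" where
  "steering_sequence lam \<longleftrightarrow>
     (\<forall>k. 0 \<le> lam k \<and> lam k \<le> 1) \<and> lam \<longlonglongrightarrow> 0 \<and>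
     \<not> summable lam \<and> summable (\<lambda>k. \<bar>lam (Suc k) - lam k\<bar>)"

end

theory Submission
  imports Defs
begin

lemma parallelogram':
  fixes a b :: "'a::real_inner"
  shows "(norm (a - b))\<^sup>2 = 2*(norm a)\<^sup>2 + 2*(norm b)\<^sup>2 - 4*(norm ((1/2) *\<^sub>R (a + b)))\<^sup>2"
  by (simp add: power2_norm_eq_inner inner_diff_left inner_diff_right inner_add_left inner_add_right inner_commute algebra_simps)

lemma nested_inter:
  fixes A :: "nat \<Rightarrow> 'a::{real_inner,complete_space} set"
  assumes cl: "\<And>n. closed (A n)" and cv: "\<And>n. convex (A n)" and ne: "\<And>n. A n \<noteq> {}"
    and dec: "\<And>n. A (Suc n) \<subseteq> A n" and bd: "\<And>n z. z \<in> A n \<Longrightarrow> norm z \<le> B"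
  shows "\<exists>c. \<forall>n. c \<in> A n"
proof -
  have decle: "A n' \<subseteq> A n" if "n \<le> n'" for n n'
    using that by (induction rule: dec_induct) (use dec in auto)
  define d where "d n = Inf (norm ` A n)" for n
  have bb: "bdd_below (norm ` A n)" for n by (rule bdd_belowI[of _ 0]) auto
  have dle: "d n \<le> norm z" if "z \<in> A n" for n z
    unfolding d_def using bb that by (auto intro: cInf_lower)
  have inc: "incseq d"
  proof (rule incseq_SucI)
    fix n show "d n \<le> d (Suc n)"
      unfolding d_def[of "Suc n"] using ne[of "Suc n"] dec[of n]
      by (intro cInf_greatest) (auto intro: dle)
  qed
  have dB: "d n \<le> B" for n using ne[of n] dle bd by (meson ex_in_conv order_trans)
  have bda: "bdd_above (range d)" using dB by (intro bdd_aboveI[of _ B]) auto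
  define dd where "dd = (SUP n. d n)"
  have dlim: "d \<longlonglongrightarrow> dd" unfolding dd_def by (rule LIMSEQ_incseq_SUP[OF bda inc])
  have ddd: "d n \<le> dd" for n unfolding dd_def using bda by (auto intro: cSUP_upper)
  have "\<exists>z. z \<in> A n \<and> norm z < d n + 1 / (Suc n)" for n
  proof -
    have "Inf (norm ` A n) < d n + 1 / Suc n" unfolding d_def by simp
    then obtain y where "y \<in> norm ` A n" "y < d n + 1 / Suc n"
      using cInf_lessD[of "norm ` A n"] ne[of n] by blast
    then show ?thesis by auto
  qed
  then obtain z where zA: "\<And>n. z n \<in> A n" and zn: "\<And>n. norm (z n) < d n + 1 / Suc n"
    by metis
  define g where "g n = 4 * (dd + 1 / Suc n)\<^sup>2 - 4 * (d n)\<^sup>2" for n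
  have glim: "g \<longlonglongrightarrow> 4 * (dd + 0)\<^sup>2 - 4 * dd\<^sup>2" unfolding g_def
    using LIMSEQ_inverse_real_of_nat by (intro tendsto_intros dlim) (simp add: inverse_eq_divide)
  hence glim0: "g \<longlonglongrightarrow> 0" by simp
  have d0: "0 \<le> d n" for n unfolding d_def using ne[of n] by (intro cInf_greatest) auto
  have key: "(norm (z n - z n'))\<^sup>2 \<le> g n" if "n \<le> n'" for n n'
  proof -
    have zn': "z n' \<in> A n" using zA decle that by blast
    have mid: "(1/2) *\<^sub>R (z n + z n') \<in> A n"
    proof -
      have "(1/2) *\<^sub>R (z n + z n') = (1 - 1/2) *\<^sub>R z n + (1/2) *\<^sub>R z n'" by (simp add: algebra_simps)
      also have "\<dots> \<in> A n" using cv[of n] zA[of n] zn' by (intro convexD) auto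
      finally show ?thesis .
    qed
    have m1: "d n \<le> norm ((1/2) *\<^sub>R (z n + z n'))" using dle mid by blast
    have a1: "norm (z n) \<le> dd + 1 / Suc n" using zn[of n] ddd[of n] by linarith
    have "1 / real (Suc n') \<le> 1 / Suc n" using that by (simp add: frac_le)
    hence a2: "norm (z n') \<le> dd + 1 / Suc n" using zn[of n'] ddd[of n'] by linarith
    have p1: "(norm (z n))\<^sup>2 \<le> (dd + 1 / Suc n)\<^sup>2" using a1 by (intro power_mono) auto
    have p2: "(norm (z n'))\<^sup>2 \<le> (dd + 1 / Suc n)\<^sup>2" using a2 by (intro power_mono) auto
    have p3: "(d n)\<^sup>2 \<le> (norm ((1/2) *\<^sub>R (z n + z n')))\<^sup>2" using m1 d0[of n] by (intro power_mono) auto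
    show ?thesis unfolding g_def parallelogram'[of "z n"] using p1 p2 p3 by linarith
  qed
  have "Cauchy z"
  proof (rule metric_CauchyI)
    fix e :: real assume e: "e > 0"
    hence "e\<^sup>2 > 0" by simp
    with glim0 obtain M where M: "\<And>n. n \<ge> M \<Longrightarrow> \<bar>g n\<bar> < e\<^sup>2"
      unfolding LIMSEQ_def dist_real_def by (metis diff_zero)
    have "dist (z a) (z b) < e" if "a \<ge> M" "b \<ge> M" for a b
    proof -
      have "(dist (z a) (z b))\<^sup>2 < e\<^sup>2"
      proof (cases "a \<le> b")
        case True thus ?thesis using key[OF True] M[OF that(1)] by (simp add: dist_norm)
      next
        case False thus ?thesis using key[of b a] M[OF that(2)] by (simp add: dist_norm dist_commute norm_minus_commute)
      qed
      thus ?thesis using e by (smt (verit) power_mono zero_le_dist)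
    qed
    thus "\<exists>M. \<forall>m\<ge>M. \<forall>n\<ge>M. dist (z m) (z n) < e" by blast
  qed
  then obtain c where c: "z \<longlonglongrightarrow> c" using Cauchy_convergent_iff convergent_def by blast
  have "c \<in> A n" for n
  proof (rule Lim_in_closed_set[OF cl[of n] _ _ c])
    show "\<forall>\<^sub>F x in sequentially. z x \<in> A n"
      using eventually_ge_at_top[of n] by eventually_elim (use zA decle in blast)
  qed simp
  thus ?thesis by blast
qed

lemma fne_nonexp:
  assumes "firmly_nonexpansive_on D T" "x \<in> D" "y \<in> D"
  shows "norm (T x - T y) \<le> norm (x - y)"
proof -
  have "(norm (T x - T y))\<^sup>2 \<le> inner (x - y) (T x - T y)"
    using assms unfolding firmly_nonexpansive_on_def by blast
  also have "\<dots> \<le> norm (x - y) * norm (T x - T y)" by (rule norm_cauchy_schwarz)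
  finally have h: "norm (T x - T y) * norm (T x - T y) \<le> norm (x - y) * norm (T x - T y)"
    by (simp add: power2_eq_square)
  show ?thesis
  proof (cases "norm (T x - T y) = 0")
    case True thus ?thesis by simp
  next
    case False thus ?thesis using h by (simp add: mult_le_cancel_right)
  qed
qed

lemma fne_quasi:
  assumes "firmly_nonexpansive_on D T" "x \<in> D" "p \<in> D" "T p = p"
  shows "(norm (T x - p))\<^sup>2 + (norm (x - T x))\<^sup>2 \<le> (norm (x - p))\<^sup>2"
proof -
  have h: "(norm (T x - p))\<^sup>2 \<le> inner (x - p) (T x - p)"
    using assms unfolding firmly_nonexpansive_on_def by (metis)
  define a where "a = x - p"
  define b where "b = T x - p"
  have xt: "x - T x = a - b" unfolding a_def b_def by simp
  have "(norm a)\<^sup>2 = (norm (a - b))\<^sup>2 + 2 * inner a b - (norm b)\<^sup>2"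
    by (simp add: power2_norm_eq_inner inner_diff_left inner_diff_right inner_commute)
  thus ?thesis using h unfolding xt a_def[symmetric] b_def[symmetric] by linarith
qed

lemma convex_comb_identity:
  fixes a b :: "'a::real_inner"
  assumes "u + v = 1"
  shows "u * (norm (a + v *\<^sub>R b))\<^sup>2 + v * (norm (a - u *\<^sub>R b))\<^sup>2 = (norm a)\<^sup>2 + u * v * (norm b)\<^sup>2"
proof -
  have h1: "(norm (a + v *\<^sub>R b))\<^sup>2 = (norm a)\<^sup>2 + 2 * v * inner a b + v\<^sup>2 * (norm b)\<^sup>2"
    unfolding power2_norm_eq_inner by (simp add: inner_add_left inner_add_right inner_commute power2_eq_square)
  have h2: "(norm (a - u *\<^sub>R b))\<^sup>2 = (norm a)\<^sup>2 - 2 * u * inner a b + u\<^sup>2 * (norm b)\<^sup>2"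
    unfolding power2_norm_eq_inner by (simp add: inner_diff_left inner_diff_right inner_commute power2_eq_square)
  have "u * (norm (a + v *\<^sub>R b))\<^sup>2 + v * (norm (a - u *\<^sub>R b))\<^sup>2
     = (u + v) * (norm a)\<^sup>2 + (u * v) * (u + v) * (norm b)\<^sup>2"
    unfolding h1 h2 by (simp add: algebra_simps power2_eq_square)
  thus ?thesis using assms by simp
qed

lemma fix_convex:
  fixes D :: "'a::real_inner set"
  assumes cD: "convex D" and ne: "\<And>x y. x \<in> D \<Longrightarrow> y \<in> D \<Longrightarrow> norm (T x - T y) \<le> norm (x - y)"
    and TD: "T ` D \<subseteq> D"
  shows "convex (Fix D T)"
proof (rule convexI)
  fix x y and u v :: real assume xF: "x \<in> Fix D T" and yF: "y \<in> Fix D T" and u: "0 \<le> u" and v: "0 \<le> v" and uv: "u + v = 1"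
  have xD: "x \<in> D" "T x = x" and yD: "y \<in> D" "T y = y" using xF yF unfolding Fix_def by auto
  define z where "z = u *\<^sub>R x + v *\<^sub>R y"
  have zD: "z \<in> D" unfolding z_def using cD xD yD u v uv by (intro convexD) auto
  define w where "w = T z"
  have u1: "u = 1 - v" and v1: "v = 1 - u" using uv by auto
  have zx: "z - x = v *\<^sub>R (y - x)" unfolding z_def u1 by (simp add: algebra_simps)
  have zy: "z - y = - (u *\<^sub>R (y - x))" unfolding z_def v1 by (simp add: algebra_simps)
  have e1: "w - x = (w - z) + v *\<^sub>R (y - x)" using zx by (metis add_diff_cancel_left diff_add_cancel add_diff_eq)
  have e2: "w - y = (w - z) - u *\<^sub>R (y - x)" using zy by (metis diff_add_cancel add_diff_eq diff_minus_eq_add minus_diff_eq)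
  have n1: "norm (w - x) \<le> v * norm (y - x)" using ne[OF zD xD(1)] xD(2) zx u v unfolding w_def by simp
  have n2: "norm (w - y) \<le> u * norm (y - x)" using ne[OF zD yD(1)] yD(2) zy u v unfolding w_def by simp
  have s1: "(norm (w - x))\<^sup>2 \<le> (v * norm (y - x))\<^sup>2" using n1 by (intro power_mono) auto
  have s2: "(norm (w - y))\<^sup>2 \<le> (u * norm (y - x))\<^sup>2" using n2 by (intro power_mono) auto
  have id: "u * (norm (w - x))\<^sup>2 + v * (norm (w - y))\<^sup>2 = (norm (w - z))\<^sup>2 + u * v * (norm (y - x))\<^sup>2"
    unfolding e1 e2 by (rule convex_comb_identity[OF uv])
  have "u * (norm (w - x))\<^sup>2 + v * (norm (w - y))\<^sup>2 \<le> u * (v * norm (y - x))\<^sup>2 + v * (u * norm (y - x))\<^sup>2"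
    using s1 s2 u v by (intro add_mono mult_left_mono) auto
  also have "\<dots> = u * v * (u + v) * (norm (y - x))\<^sup>2" by (simp add: algebra_simps power2_eq_square)
  finally have "(norm (w - z))\<^sup>2 \<le> 0" using id uv by simp
  hence "w = z" by simp
  thus "u *\<^sub>R x + v *\<^sub>R y \<in> Fix D T" unfolding Fix_def w_def z_def using zD z_def by auto
qed

lemma fix_closed:
  assumes cD: "closed D" and ne: "\<And>x y. x \<in> D \<Longrightarrow> y \<in> D \<Longrightarrow> norm (T x - T y) \<le> norm (x - y)"
  shows "closed (Fix D T)"
proof -
  have cT: "continuous_on D T" unfolding continuous_on_iff
  proof (intro ballI allI impI)
    fix x e assume "x \<in> D" "(e::real) > 0"
    thus "\<exists>d>0. \<forall>x'\<in>D. dist x' x < d \<longrightarrow> dist (T x') (T x) < e"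
      using ne by (intro exI[of _ e]) (auto simp: dist_norm intro: le_less_trans)
  qed
  have "continuous_on D (\<lambda>x. T x - x)" by (intro continuous_on_diff cT continuous_on_id)
  hence "closed {x \<in> D. T x - x = 0}" using cD by (rule continuous_closed_preimage_constant)
  thus ?thesis unfolding Fix_def by simp
qed


lemma proj_exists:
  fixes F :: "'a::{real_inner,complete_space} set"
  assumes cl: "closed F" and cv: "convex F" and ne: "F \<noteq> {}"
  shows "metric_proj F u \<in> F \<and> (\<forall>y\<in>F. dist u (metric_proj F u) \<le> dist u y)"
proof -
  define dF where "dF = Inf (dist u ` F)"
  have bb: "bdd_below (dist u ` F)" by (rule bdd_belowI[of _ 0]) auto
  have dle: "dF \<le> dist u y" if "y \<in> F" for y unfolding dF_def using bb that by (auto intro: cInf_lower)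
  define A where "A n = F \<inter> cball u (dF + 1 / Suc n)" for n
  have neA: "A n \<noteq> {}" for n
  proof -
    have "Inf (dist u ` F) < dF + 1 / Suc n" unfolding dF_def by simp
    then obtain y where "y \<in> dist u ` F" "y < dF + 1 / Suc n"
      using cInf_lessD[of "dist u ` F"] ne by blast
    then show ?thesis unfolding A_def by auto
  qed
  have "\<exists>c. \<forall>n. c \<in> A n"
  proof (rule nested_inter[where B = "norm u + dF + 1"])
    fix n show "closed (A n)" unfolding A_def using cl by auto
    show "convex (A n)" unfolding A_def using cv by (intro convex_Int convex_cball)
    show "A n \<noteq> {}" by (rule neA)
    have "1 / real (Suc (Suc n)) \<le> 1 / Suc n" by (simp add: frac_le)
    thus "A (Suc n) \<subseteq> A n" unfolding A_def by auto
    fix z assume "z \<in> A n"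
    hence "dist u z \<le> dF + 1 / Suc n" unfolding A_def by auto
    moreover have "1 / real (Suc n) \<le> 1" by simp
    moreover have "norm z \<le> norm u + dist u z" by (metis dist_norm norm_triangle_sub add.commute norm_minus_commute)
    ultimately show "norm z \<le> norm u + dF + 1" by linarith
  qed
  then obtain c where c: "\<And>n. c \<in> A n" by blast
  have cF: "c \<in> F" using c[of 0] unfolding A_def by auto
  have "dist u c \<le> dF"
  proof (rule field_le_epsilon)
    fix e :: real assume e: "e > 0"
    then obtain n where n: "inverse (real (Suc n)) < e" using reals_Archimedean by blast
    have "dist u c \<le> dF + 1 / Suc n" using c[of n] unfolding A_def by auto
    thus "dist u c \<le> dF + e" using n by (simp add: inverse_eq_divide)
  qed
  hence "c \<in> F \<and> (\<forall>y\<in>F. dist u c \<le> dist u y)" using cF dle by (auto intro: order_trans)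
  thus ?thesis unfolding metric_proj_def by (rule someI)
qed

lemma proj_vi:
  fixes F :: "'a::{real_inner,complete_space} set"
  assumes cl: "closed F" and cv: "convex F" and ne: "F \<noteq> {}" and q: "q \<in> F"
  shows "inner (u - metric_proj F u) (q - metric_proj F u) \<le> 0"
proof (rule ccontr)
  define p where "p = metric_proj F u"
  have pF: "p \<in> F" and pmin: "\<And>y. y \<in> F \<Longrightarrow> dist u p \<le> dist u y"
    using proj_exists[OF cl cv ne, of u] unfolding p_def by auto
  assume "\<not> inner (u - metric_proj F u) (q - metric_proj F u) \<le> 0"
  hence c: "inner (u - p) (q - p) > 0" unfolding p_def by simp
  define c0 where "c0 = inner (u - p) (q - p)"
  define nn where "nn = (norm (q - p))\<^sup>2"
  define t where "t = min 1 (c0 / (nn + 1))"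
  have nn0: "nn \<ge> 0" unfolding nn_def by simp
  have t0: "0 < t" "t \<le> 1" unfolding t_def using c nn0 c0_def by auto
  have tle: "t * nn < c0"
  proof -
    have "t * nn \<le> c0 / (nn + 1) * nn" unfolding t_def using nn0 by (intro mult_right_mono) auto
    also have "\<dots> < c0" using c nn0 unfolding c0_def by (simp add: field_simps)
    finally show ?thesis .
  qed
  define z where "z = (1 - t) *\<^sub>R p + t *\<^sub>R q"
  have zF: "z \<in> F" unfolding z_def using cv pF q t0 by (intro convexD) auto
  have uz: "u - z = (u - p) - t *\<^sub>R (q - p)" unfolding z_def by (simp add: algebra_simps)
  have "(norm (u - z))\<^sup>2 = (norm (u - p))\<^sup>2 - 2 * t * c0 + t\<^sup>2 * nn"
    unfolding uz c0_def nn_def power2_norm_eq_inner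
    by (simp add: inner_diff_left inner_diff_right inner_commute power2_eq_square)
  moreover have "(norm (u - p))\<^sup>2 \<le> (norm (u - z))\<^sup>2"
    using pmin[OF zF] by (simp add: dist_norm power_mono)
  ultimately have "2 * t * c0 \<le> t\<^sup>2 * nn" by linarith
  hence "2 * c0 \<le> t * nn" using t0 by (simp add: power2_eq_square mult.assoc)
  thus False using tle c unfolding c0_def by linarith
qed

lemma sq_sum_le: "((a::real) + b)\<^sup>2 \<le> 2 * a\<^sup>2 + 2 * b\<^sup>2"
proof -
  have "0 \<le> (a - b)\<^sup>2" by simp
  thus ?thesis by (simp add: power2_eq_square algebra_simps)
qed

lemma norm_sq_tri: "(norm ((a::'a::real_normed_vector) + b))\<^sup>2 \<le> 2 * (norm a)\<^sup>2 + 2 * (norm b)\<^sup>2"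
proof -
  have "(norm (a + b))\<^sup>2 \<le> (norm a + norm b)\<^sup>2" by (intro power_mono norm_triangle_ineq) auto
  thus ?thesis using sq_sum_le[of "norm a" "norm b"] by linarith
qed

lemma string_op_Cons: "string_op T (i # t) x = string_op T t (T i x)"
  unfolding string_op_def by simp

lemma string_op_Nil: "string_op T [] x = x"
  unfolding string_op_def by simp

lemma ten_bound:
  fixes a g P :: real
  assumes a: "0 \<le> a" and g: "0 \<le> g" and P: "1 \<le> P"
  shows "2 * (P * g) + 2 * a \<le> 10 * P * (a + g)" and "a \<le> 10 * P * (a + g)"
    and "8 * a + 2 * (P * g) \<le> 10 * P * (a + g)"
proof -
  have e: "10 * P * (a + g) = 10 * (P * a) + 10 * (P * g)" by (simp add: algebra_simps)
  have pa: "a \<le> P * a" using mult_right_mono[OF P a] by simp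
  have pg: "0 \<le> P * g" using P g by simp
  show "2 * (P * g) + 2 * a \<le> 10 * P * (a + g)" unfolding e using pa pg a by linarith
  show "a \<le> 10 * P * (a + g)" unfolding e using pa pg a by linarith
  show "8 * a + 2 * (P * g) \<le> 10 * P * (a + g)" unfolding e using pa pg a by linarith
qed

lemma string_props:
  assumes TD': "\<forall>i\<in>{1..m}. T i ` D \<subseteq> D"
    and fne': "\<forall>i\<in>{1..m}. firmly_nonexpansive_on D (T i)"
    and pD: "p \<in> D" and Tp': "\<forall>i\<in>{1..m}. T i p = p"
  shows "set t \<subseteq> {1..m} \<Longrightarrow> x \<in> D \<Longrightarrow>
    string_op T t x \<in> D \<and>
    (norm (string_op T t x - p))\<^sup>2 \<le> (norm (x - p))\<^sup>2 \<and>
    (norm (string_op T t x - x))\<^sup>2 \<le> 10 ^ length t * ((norm (x - p))\<^sup>2 - (norm (string_op T t x - p))\<^sup>2) \<and>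
    (\<forall>j\<in>set t. (norm (x - T j x))\<^sup>2 \<le> 10 ^ length t * ((norm (x - p))\<^sup>2 - (norm (string_op T t x - p))\<^sup>2))"
proof (induction t arbitrary: x)
  note TD = TD'[rule_format] and fne = fne'[rule_format] and Tp = Tp'[rule_format]
  case Nil
  then show ?case by (simp add: string_op_Nil)
next
  note TD = TD'[rule_format] and fne = fne'[rule_format] and Tp = Tp'[rule_format]
  case (Cons i t)
  have i: "i \<in> {1..m}" and tm: "set t \<subseteq> {1..m}" using Cons.prems by auto
  define y where "y = T i x"
  have yD: "y \<in> D" using TD[OF i] Cons.prems y_def by auto
  have S: "string_op T (i # t) x = string_op T t y" unfolding y_def string_op_Cons ..
  note IH = Cons.IH[OF tm yD]
  define a where "a = (norm (x - y))\<^sup>2"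
  define g where "g = (norm (y - p))\<^sup>2 - (norm (string_op T t y - p))\<^sup>2"
  define G where "G = (norm (x - p))\<^sup>2 - (norm (string_op T t y - p))\<^sup>2"
  have q: "(norm (y - p))\<^sup>2 + a \<le> (norm (x - p))\<^sup>2"
    using fne_quasi[OF fne[OF i] Cons.prems(2) pD Tp[OF i]] unfolding a_def y_def by simp
  have g0: "0 \<le> g" using IH unfolding g_def by simp
  have a0: "0 \<le> a" unfolding a_def by simp
  have G: "a + g \<le> G" using q unfolding G_def g_def by linarith
  have pw: "(10::real) ^ length t \<ge> 1" by simp
  have pw2: "(10::real) ^ length (i # t) = 10 * 10 ^ length t" by simp
  have d: "(norm (string_op T t y - x))\<^sup>2 \<le> 10 ^ length (i # t) * G"
  proof -
    have "(norm (string_op T t y - x))\<^sup>2 = (norm ((string_op T t y - y) + (y - x)))\<^sup>2" by simp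
    also have "\<dots> \<le> 2 * (norm (string_op T t y - y))\<^sup>2 + 2 * (norm (y - x))\<^sup>2" by (rule norm_sq_tri)
    also have "\<dots> \<le> 2 * (10 ^ length t * g) + 2 * a"
      using IH unfolding g_def a_def by (simp add: norm_minus_commute)
    also have "\<dots> \<le> 10 ^ length (i # t) * (a + g)" unfolding pw2 using pw g0 a0
      using ten_bound(1)[OF a0 g0 pw] by (simp add: mult.assoc)
    also have "\<dots> \<le> 10 ^ length (i # t) * G" using G by (intro mult_left_mono) auto
    finally show ?thesis .
  qed
  have e: "(norm (x - T j x))\<^sup>2 \<le> 10 ^ length (i # t) * G" if j: "j \<in> set (i # t)" for j
  proof (cases "j = i")
    case True
    have "(norm (x - T j x))\<^sup>2 = a" unfolding a_def y_def True ..
    also have "\<dots> \<le> 10 ^ length (i # t) * (a + g)" using pw g0 a0 unfolding pw2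
      using ten_bound(2)[OF a0 g0 pw] by (simp add: mult.assoc)
    also have "\<dots> \<le> 10 ^ length (i # t) * G" using G by (intro mult_left_mono) auto
    finally show ?thesis .
  next
    case False
    hence jt: "j \<in> set t" using j by auto
    hence jm: "j \<in> {1..m}" using tm by auto
    have ne: "norm (T j y - T j x) \<le> norm (y - x)" by (rule fne_nonexp[OF fne[OF jm] yD Cons.prems(2)])
    have t1: "norm (y - T j x) \<le> norm (y - T j y) + norm (T j y - T j x)"
      by (rule norm_diff_triangle_le[where y="T j y"]) auto
    have "norm (x - T j x) \<le> norm (x - y) + (norm (y - T j y) + norm (T j y - T j x))"
      by (rule norm_diff_triangle_le[where y=y]) (auto intro: t1)
    also have "\<dots> \<le> 2 * norm (x - y) + norm (y - T j y)" using ne by (simp add: norm_minus_commute)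
    finally have n1: "norm (x - T j x) \<le> 2 * norm (x - y) + norm (y - T j y)" .
    have "(norm (x - T j x))\<^sup>2 \<le> (2 * norm (x - y) + norm (y - T j y))\<^sup>2" using n1 by (intro power_mono) auto
    also have "\<dots> \<le> 2 * (2 * norm (x - y))\<^sup>2 + 2 * (norm (y - T j y))\<^sup>2" by (rule sq_sum_le)
    also have "\<dots> \<le> 8 * a + 2 * (10 ^ length t * g)"
      using IH jt unfolding g_def a_def by (simp add: power_mult_distrib)
    also have "\<dots> \<le> 10 ^ length (i # t) * (a + g)" unfolding pw2 using pw g0 a0
      using ten_bound(3)[OF a0 g0 pw] by (simp add: mult.assoc)
    also have "\<dots> \<le> 10 ^ length (i # t) * G" using G by (intro mult_left_mono) auto
    finally show ?thesis .
  qed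
  have c2: "(norm (string_op T t y - p))\<^sup>2 \<le> (norm (x - p))\<^sup>2" using IH q a0 by linarith
  show ?case unfolding S using IH c2 d e unfolding G_def by blast
qed


lemma norm_sq_convex:
  fixes z :: "'b \<Rightarrow> 'a::real_inner"
  assumes fin: "finite A" and w0: "\<And>t. t \<in> A \<Longrightarrow> 0 \<le> w t" and w1: "sum w A = 1"
  shows "(norm (\<Sum>t\<in>A. w t *\<^sub>R z t))\<^sup>2 \<le> (\<Sum>t\<in>A. w t * (norm (z t))\<^sup>2)"
proof -
  have ne: "A \<noteq> {}" using w1 by auto
  have "norm (\<Sum>t\<in>A. w t *\<^sub>R z t) \<le> (\<Sum>t\<in>A. w t * norm (z t))"
    using w0 by (intro order_trans[OF norm_sum]) (simp add: sum_mono)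
  hence "(norm (\<Sum>t\<in>A. w t *\<^sub>R z t))\<^sup>2 \<le> (\<Sum>t\<in>A. w t * norm (z t))\<^sup>2" by (intro power_mono) auto
  also have "\<dots> = power2 (\<Sum>t\<in>A. w t *\<^sub>R norm (z t))" by simp
  also have "\<dots> \<le> (\<Sum>t\<in>A. w t * power2 (norm (z t)))"
    by (rule convex_on_sum[OF fin ne convex_power2 w1 w0]) auto
  finally show ?thesis .
qed

lemma string_fix:
  assumes "\<And>i. i \<in> {1..m} \<Longrightarrow> T i p = p"
  shows "set t \<subseteq> {1..m} \<Longrightarrow> string_op T t p = p"
  by (induction t) (use assms in \<open>auto simp: string_op_Cons string_op_Nil\<close>)

definition Uop :: "(nat \<Rightarrow> 'a \<Rightarrow> 'a::real_vector) \<Rightarrow> nat list set \<times> (nat list \<Rightarrow> real) \<Rightarrow> 'a \<Rightarrow> 'a" where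
  "Uop T Sr x = (\<Sum>t\<in>fst Sr. snd Sr t *\<^sub>R string_op T t x)"

definition Ucst :: "nat list set \<times> (nat list \<Rightarrow> real) \<Rightarrow> real" where
  "Ucst Sr = (\<Sum>t\<in>fst Sr. 10 ^ length t / snd Sr t)"

lemma U_props:
  assumes TD: "\<And>i. i \<in> {1..m} \<Longrightarrow> T i ` D \<subseteq> D"
    and fne: "\<And>i. i \<in> {1..m} \<Longrightarrow> firmly_nonexpansive_on D (T i)"
    and pD: "p \<in> D" and Tp: "\<And>i. i \<in> {1..m} \<Longrightarrow> T i p = p"
    and cD: "convex D"
    and SM: "Sr \<in> calM m" and xD: "x \<in> D"
  shows "Uop T Sr x \<in> D \<and> (norm (Uop T Sr x - p))\<^sup>2 \<le> (norm (x - p))\<^sup>2 \<and>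
    (norm (Uop T Sr x - x))\<^sup>2 \<le> Ucst Sr * ((norm (x - p))\<^sup>2 - (norm (Uop T Sr x - p))\<^sup>2) \<and>
    (\<forall>i\<in>{1..m}. (norm (x - T i x))\<^sup>2 \<le> Ucst Sr * ((norm (x - p))\<^sup>2 - (norm (Uop T Sr x - p))\<^sup>2))"
proof -
  obtain \<Omega> w where Sr: "Sr = (\<Omega>, w)" by (cases Sr)
  have fit: "fit m \<Omega>" and w: "\<And>t. t \<in> \<Omega> \<Longrightarrow> 0 < w t \<and> w t \<le> 1" and w1: "sum w \<Omega> = 1"
    using SM unfolding Sr calM_def by auto
  have fin: "finite \<Omega>" and iv: "\<And>t. t \<in> \<Omega> \<Longrightarrow> set t \<subseteq> {1..m}"
    and cover: "\<And>i. i \<in> {1..m} \<Longrightarrow> \<exists>t\<in>\<Omega>. i \<in> set t"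
    using fit unfolding fit_def index_vector_def by auto
  have w0: "\<And>t. t \<in> \<Omega> \<Longrightarrow> 0 \<le> w t" using w by (simp add: less_imp_le)
  have TD': "\<forall>i\<in>{1..m}. T i ` D \<subseteq> D" and fne': "\<forall>i\<in>{1..m}. firmly_nonexpansive_on D (T i)"
    and Tp': "\<forall>i\<in>{1..m}. T i p = p" using TD fne Tp by auto
  note SP = string_props[OF TD' fne' pD Tp' iv xD]
  define U where "U = (\<Sum>t\<in>\<Omega>. w t *\<^sub>R string_op T t x)"
  have UU: "Uop T Sr x = U" unfolding Uop_def U_def Sr by simp
  have C: "Ucst Sr = (\<Sum>t\<in>\<Omega>. 10 ^ length t / w t)" unfolding Ucst_def Sr by simp
  define \<gamma> where "\<gamma> t = (norm (x - p))\<^sup>2 - (norm (string_op T t x - p))\<^sup>2" for t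
  define \<delta> where "\<delta> = (norm (x - p))\<^sup>2 - (norm (U - p))\<^sup>2"
  have UD: "U \<in> D" unfolding U_def using cD fin w1 w0 SP by (intro convex_sum) auto
  have Up: "U - p = (\<Sum>t\<in>\<Omega>. w t *\<^sub>R (string_op T t x - p))"
    by (simp add: U_def scaleR_diff_right sum_subtractf flip: scaleR_sum_left add: w1)
  have Ux: "U - x = (\<Sum>t\<in>\<Omega>. w t *\<^sub>R (string_op T t x - x))"
    by (simp add: U_def scaleR_diff_right sum_subtractf flip: scaleR_sum_left add: w1)
  have n1: "(norm (U - p))\<^sup>2 \<le> (\<Sum>t\<in>\<Omega>. w t * (norm (string_op T t x - p))\<^sup>2)"
    unfolding Up by (rule norm_sq_convex[OF fin w0 w1])
  have xp: "(norm (x - p))\<^sup>2 = (\<Sum>t\<in>\<Omega>. w t * (norm (x - p))\<^sup>2)"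
    by (simp flip: sum_distrib_right add: w1)
  have dsum: "(\<Sum>t\<in>\<Omega>. w t * \<gamma> t) \<le> \<delta>"
    using n1 xp unfolding \<delta>_def \<gamma>_def by (simp add: right_diff_distrib sum_subtractf)
  have g0: "0 \<le> \<gamma> t" if "t \<in> \<Omega>" for t using SP[OF that] unfolding \<gamma>_def by simp
  have wg: "w t * \<gamma> t \<le> \<delta>" if t: "t \<in> \<Omega>" for t
  proof -
    have "w t * \<gamma> t \<le> (\<Sum>t\<in>\<Omega>. w t * \<gamma> t)"
      using fin t g0 w0 by (intro member_le_sum) auto
    thus ?thesis using dsum by linarith
  qed
  have d0: "0 \<le> \<delta>"
  proof -
    have "\<Omega> \<noteq> {}" using w1 by auto
    then obtain t0 where t0: "t0 \<in> \<Omega>" by blast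
    have "0 \<le> w t0 * \<gamma> t0" using w0[OF t0] g0[OF t0] by simp
    thus ?thesis using wg[OF t0] by linarith
  qed
  have gt: "\<gamma> t \<le> \<delta> / w t" if t: "t \<in> \<Omega>" for t
    using wg[OF t] w[OF t] by (simp add: field_simps mult.commute)
  have bt: "10 ^ length t * \<gamma> t \<le> (10 ^ length t / w t) * \<delta>" if t: "t \<in> \<Omega>" for t
  proof -
    have "10 ^ length t * \<gamma> t \<le> 10 ^ length t * (\<delta> / w t)" using gt[OF t] by (intro mult_left_mono) auto
    thus ?thesis by simp
  qed
  have term_le: "10 ^ length t / w t \<le> (\<Sum>t\<in>\<Omega>. 10 ^ length t / w t)" if t: "t \<in> \<Omega>" for t
    using fin t w by (intro member_le_sum) (auto simp: less_imp_le)
  have part_c: "(norm (U - x))\<^sup>2 \<le> (\<Sum>t\<in>\<Omega>. 10 ^ length t / w t) * \<delta>"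
  proof -
    have "(norm (U - x))\<^sup>2 \<le> (\<Sum>t\<in>\<Omega>. w t * (norm (string_op T t x - x))\<^sup>2)"
      unfolding Ux by (rule norm_sq_convex[OF fin w0 w1])
    also have "\<dots> \<le> (\<Sum>t\<in>\<Omega>. w t * (10 ^ length t * \<gamma> t))"
      using SP w0 unfolding \<gamma>_def by (intro sum_mono mult_left_mono) auto
    also have "\<dots> \<le> (\<Sum>t\<in>\<Omega>. (10 ^ length t / w t) * \<delta>)"
    proof (intro sum_mono)
      fix t assume t: "t \<in> \<Omega>"
      have "w t * (10 ^ length t * \<gamma> t) \<le> 1 * (10 ^ length t * \<gamma> t)"
        using w[OF t] g0[OF t] by (intro mult_right_mono) auto
      hence "w t * (10 ^ length t * \<gamma> t) \<le> 10 ^ length t * \<gamma> t" by simp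
      thus "w t * (10 ^ length t * \<gamma> t) \<le> (10 ^ length t / w t) * \<delta>" using bt[OF t] by linarith
    qed
    also have "\<dots> = (\<Sum>t\<in>\<Omega>. 10 ^ length t / w t) * \<delta>" by (simp add: sum_distrib_right)
    finally show ?thesis .
  qed
  have part_d: "(norm (x - T i x))\<^sup>2 \<le> (\<Sum>t\<in>\<Omega>. 10 ^ length t / w t) * \<delta>" if i: "i \<in> {1..m}" for i
  proof -
    obtain t where t: "t \<in> \<Omega>" "i \<in> set t" using cover[OF i] by blast
    have "(norm (x - T i x))\<^sup>2 \<le> 10 ^ length t * \<gamma> t" using SP[OF t(1)] t(2) unfolding \<gamma>_def by blast
    also have "\<dots> \<le> (10 ^ length t / w t) * \<delta>" by (rule bt[OF t(1)])
    also have "\<dots> \<le> (\<Sum>t\<in>\<Omega>. 10 ^ length t / w t) * \<delta>" using term_le[OF t(1)] d0 by (intro mult_right_mono)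
    finally show ?thesis .
  qed
  have c2: "(norm (U - p))\<^sup>2 \<le> (norm (x - p))\<^sup>2" using d0 unfolding \<delta>_def by linarith
  show ?thesis unfolding UU C using UD c2 part_c part_d unfolding \<delta>_def by blast
qed

lemma cch_sub: "S \<subseteq> C \<Longrightarrow> closed C \<Longrightarrow> convex C \<Longrightarrow> closure (convex hull S) \<subseteq> C"
  by (intro closure_minimal hull_minimal) auto

lemma demi:
  fixes y :: "nat \<Rightarrow> 'a::{real_inner,complete_space}"
  assumes clD: "closed D" and cD: "convex D" and TD: "\<And>i. i \<in> {1..m} \<Longrightarrow> T i ` D \<subseteq> D"
    and ne: "\<And>i a b. i \<in> {1..m} \<Longrightarrow> a \<in> D \<Longrightarrow> b \<in> D \<Longrightarrow> norm (T i a - T i b) \<le> norm (a - b)"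
    and yD: "\<And>n. y n \<in> D" and bd: "\<And>n. norm (y n) \<le> B"
    and lim: "\<And>i. i \<in> {1..m} \<Longrightarrow> (\<lambda>n. norm (y n - T i (y n))) \<longlonglongrightarrow> 0"
    and ge: "\<And>n. \<beta> \<le> inner v (y n)"
  shows "\<exists>c \<in> (\<Inter>i\<in>{1..m}. Fix D (T i)). \<beta> \<le> inner v c"
proof -
  define A where "A N = closure (convex hull (y ` {N..}))" for N
  have AD: "A N \<subseteq> D" for N unfolding A_def using yD clD cD by (intro cch_sub) auto
  have AB: "A N \<subseteq> cball 0 B" for N unfolding A_def using bd by (intro cch_sub) auto
  have Av: "A N \<subseteq> {z. \<beta> \<le> inner v z}" for N unfolding A_def using ge
    by (intro cch_sub) (auto intro: closed_halfspace_ge convex_halfspace_ge)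
  have "\<exists>c. \<forall>n. c \<in> A n"
  proof (rule nested_inter[where B = B])
    fix n show "closed (A n)" unfolding A_def by simp
    show "convex (A n)" unfolding A_def by (simp add: convex_closure)
    show "A n \<noteq> {}" unfolding A_def by simp
    show "A (Suc n) \<subseteq> A n" unfolding A_def by (intro closure_mono hull_mono image_mono) auto
    fix z assume "z \<in> A n" thus "norm z \<le> B" using AB[of n] by (auto simp: mem_cball_0)
  qed
  then obtain c where c: "\<And>n. c \<in> A n" by blast
  have cD': "c \<in> D" using c AD by blast
  have fx: "T i c = c" if i: "i \<in> {1..m}" for i
  proof -
    define e where "e = c - T i c"
    define \<rho> where "\<rho> n = norm (y n - T i (y n))" for n
    define h where "h n = (\<rho> n)\<^sup>2 + 2 * \<rho> n * (B + norm c)" for n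
    have rl: "\<rho> \<longlonglongrightarrow> 0" using lim[OF i] unfolding \<rho>_def .
    have "h \<longlonglongrightarrow> 0\<^sup>2 + 2 * 0 * (B + norm c)" unfolding h_def by (intro tendsto_intros rl)
    hence hlim: "h \<longlonglongrightarrow> 0" by simp
    have hb: "2 * inner (y n - c) e + (norm e)\<^sup>2 \<le> h n" for n
    proof -
      have r0: "0 \<le> \<rho> n" unfolding \<rho>_def by simp
      have "norm (y n - T i c) \<le> norm (y n - T i (y n)) + norm (T i (y n) - T i c)"
        by (rule norm_diff_triangle_le[where y="T i (y n)"]) auto
      also have "\<dots> \<le> \<rho> n + norm (y n - c)" unfolding \<rho>_def using ne[OF i yD cD'] by simp
      finally have a: "norm (y n - T i c) \<le> \<rho> n + norm (y n - c)" .
      have yc: "norm (y n - c) \<le> B + norm c"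
        using bd[of n] norm_triangle_ineq4[of "y n" c] by linarith
      have "(norm (y n - T i c))\<^sup>2 \<le> (\<rho> n + norm (y n - c))\<^sup>2" using a by (intro power_mono) auto
      also have "\<dots> = (\<rho> n)\<^sup>2 + 2 * \<rho> n * norm (y n - c) + (norm (y n - c))\<^sup>2" by (simp add: power2_eq_square algebra_simps)
      also have "\<dots> \<le> (\<rho> n)\<^sup>2 + 2 * \<rho> n * (B + norm c) + (norm (y n - c))\<^sup>2"
        using yc r0 by (simp add: mult_left_mono)
      finally have b: "(norm (y n - T i c))\<^sup>2 \<le> h n + (norm (y n - c))\<^sup>2" unfolding h_def by simp
      have yy: "y n - T i c = (y n - c) + e" unfolding e_def by simp
      have "(norm ((y n - c) + e))\<^sup>2 = (norm (y n - c))\<^sup>2 + 2 * inner (y n - c) e + (norm e)\<^sup>2"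
        unfolding power2_norm_eq_inner by (simp add: inner_add_left inner_add_right inner_commute)
      hence "(norm (y n - T i c))\<^sup>2 = (norm (y n - c))\<^sup>2 + 2 * inner (y n - c) e + (norm e)\<^sup>2"
        unfolding yy .
      thus ?thesis using b by linarith
    qed
    have "(norm e)\<^sup>2 \<le> \<epsilon>" if \<epsilon>: "\<epsilon> > 0" for \<epsilon>
    proof -
      obtain N where N: "\<And>n. n \<ge> N \<Longrightarrow> \<bar>h n\<bar> < \<epsilon>"
        using hlim \<epsilon> unfolding LIMSEQ_def dist_real_def by (metis diff_zero)
      define K where "K = (\<epsilon> - (norm e)\<^sup>2) / 2 + inner e c"
      have "y ` {N..} \<subseteq> {z. inner e z \<le> K}"
      proof
        fix z assume "z \<in> y ` {N..}"
        then obtain n where n: "n \<ge> N" "z = y n" by auto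
        have "2 * inner (y n - c) e + (norm e)\<^sup>2 \<le> \<epsilon>" using hb[of n] N[OF n(1)] by linarith
        thus "z \<in> {z. inner e z \<le> K}" unfolding K_def n(2)
          by (simp add: inner_diff_left inner_diff_right inner_commute field_simps)
      qed
      hence "A N \<subseteq> {z. inner e z \<le> K}" unfolding A_def
        by (intro cch_sub) (auto intro: closed_halfspace_le convex_halfspace_le)
      hence "inner e c \<le> K" using c[of N] by auto
      thus ?thesis unfolding K_def by simp
    qed
    hence "(norm e)\<^sup>2 \<le> 0" by (meson dense not_le)
    thus ?thesis unfolding e_def by simp
  qed
  have "c \<in> (\<Inter>i\<in>{1..m}. Fix D (T i))" using cD' fx unfolding Fix_def by auto
  moreover have "\<beta> \<le> inner v c" using c[of 0] Av by blast
  ultimately show ?thesis by blast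
qed

lemma lim_sub:
  fixes f :: "nat \<Rightarrow> real"
  assumes "f \<longlonglongrightarrow> l" and "\<And>n. n \<le> kk n"
  shows "(\<lambda>n. f (kk n)) \<longlonglongrightarrow> l"
proof -
  have "filterlim kk sequentially sequentially"
    by (rule filterlim_at_top_mono[OF filterlim_ident]) (use assms(2) in auto)
  thus ?thesis using assms(1) by (rule filterlim_compose[rotated])
qed

lemma decay:
  fixes t lam :: "nat \<Rightarrow> real"
  assumes lam: "\<And>k. 0 \<le> lam k \<and> lam k \<le> 1" and ns: "\<not> summable lam"
    and t0: "\<And>k. 0 \<le> t k" and rec: "\<And>k. k \<ge> K \<Longrightarrow> t (Suc k) \<le> (1 - lam k) * t k"
  shows "t \<longlonglongrightarrow> 0"
proof -
  define S where "S n = (\<Sum>j<n. lam (j + K))" for n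
  have bound: "t (n + K) \<le> t K * exp (- S n)" for n
  proof (induction n)
    case 0 thus ?case by (simp add: S_def)
  next
    case (Suc n)
    have l: "0 \<le> lam (n + K)" "lam (n + K) \<le> 1" using lam by auto
    have "t (Suc n + K) \<le> (1 - lam (n + K)) * t (n + K)" using rec[of "n + K"] by simp
    also have "\<dots> \<le> (1 - lam (n + K)) * (t K * exp (- S n))" using Suc l by (intro mult_left_mono) auto
    also have "\<dots> \<le> exp (- lam (n + K)) * (t K * exp (- S n))"
    proof (intro mult_right_mono)
      show "1 - lam (n + K) \<le> exp (- lam (n + K))" using exp_ge_add_one_self[of "- lam (n + K)"] by simp
      show "0 \<le> t K * exp (- S n)" using t0[of K] by simp
    qed
    also have "\<dots> = t K * exp (- S (Suc n))" unfolding S_def by (simp add: exp_add[symmetric] algebra_simps)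
    finally show ?case .
  qed
  have nsK: "\<not> summable (\<lambda>j. lam (j + K))" using ns summable_iff_shift[of lam K] by simp
  have unb: "\<exists>n. S n > B" for B
  proof (rule ccontr)
    assume "\<not> (\<exists>n. S n > B)"
    hence "\<And>n. (\<Sum>j<n. lam (j + K)) \<le> B" unfolding S_def by (simp add: not_less)
    hence "summable (\<lambda>j. lam (j + K))" using lam by (intro summableI_nonneg_bounded) auto
    thus False using nsK by simp
  qed
  have Smono: "S n \<le> S n'" if "n \<le> n'" for n n'
    unfolding S_def using lam that by (intro sum_mono2) auto
  show ?thesis unfolding LIMSEQ_def dist_real_def
  proof (intro allI impI)
    fix e :: real assume e: "e > 0"
    obtain n0 where n0: "S n0 > ln ((t K + 1) / e)" using unb by blast
    have "\<bar>t k - 0\<bar> < e" if k: "k \<ge> n0 + K" for k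
    proof -
      have kk: "k = (k - K) + K" using k by simp
      have "S n0 \<le> S (k - K)" using k by (intro Smono) auto
      hence "exp (- S (k - K)) \<le> exp (- S n0)" by simp
      also have "\<dots> < exp (- ln ((t K + 1) / e))" using n0 by simp
      also have "\<dots> = e / (t K + 1)" using e t0[of K] by (simp add: exp_minus)
      finally have ex: "exp (- S (k - K)) < e / (t K + 1)" .
      have "t k \<le> t K * exp (- S (k - K))" using bound[of "k - K"] kk by simp
      also have "\<dots> \<le> t K * (e / (t K + 1))" using ex t0[of K] by (intro mult_left_mono) auto
      also have "\<dots> < e" using e t0[of K] by (simp add: field_simps)
      finally show ?thesis using t0[of k] by simp
    qed
    thus "\<exists>N. \<forall>k\<ge>N. \<bar>t k - 0\<bar> < e" by blast
  qed
qed


lemma step_real: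
  fixes l a a' d bb \<epsilon> \<eta> RR :: real
  assumes l0: "0 \<le> l" and l1: "l \<le> 1" and a0: "0 \<le> a" and aR: "a \<le> RR" and d0: "0 \<le> d"
    and bR: "bb \<le> RR" and key: "a' \<le> (1 - l) * (a - d) + 2 * l * bb"
    and small: "l * (\<eta> + 2 * RR + 1) < \<eta> / 2" and \<eta>: "\<eta> > 0" and \<epsilon>: "\<epsilon> > 0"
    and C: "d \<le> \<eta> \<Longrightarrow> bb \<le> \<epsilon>"
  shows "max (a' - 2 * \<epsilon>) 0 \<le> (1 - l) * max (a - 2 * \<epsilon>) 0"
proof -
  have key': "a' \<le> a - l * a - d + l * d + 2 * (l * bb)" using key by (simp add: algebra_simps)
  have s': "l * \<eta> + 2 * (l * RR) + l < \<eta> / 2" using small by (simp add: algebra_simps)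
  have p3: "0 \<le> l * a" using l0 a0 by simp
  have p4: "l * a \<le> l * RR" using aR l0 by (rule mult_left_mono)
  have p6: "l * bb \<le> l * RR" using bR l0 by (rule mult_left_mono)
  have p8: "0 \<le> l * \<epsilon>" using l0 \<epsilon> by simp
  have rhs_nn: "0 \<le> (1 - l) * max (a - 2 * \<epsilon>) 0" using l1 by simp
  show ?thesis
  proof (cases "d \<le> \<eta>")
    case True
    hence b: "bb \<le> \<epsilon>" by (rule C)
    have p9: "l * bb \<le> l * \<epsilon>" using b l0 by (rule mult_left_mono)
    have p10: "l * d \<le> d" using mult_right_mono[OF l1 d0] by simp
    have a'b: "a' - 2 * \<epsilon> \<le> (1 - l) * (a - 2 * \<epsilon>)"
    proof -
      have "(1 - l) * (a - 2 * \<epsilon>) = a - l * a - 2 * \<epsilon> + 2 * (l * \<epsilon>)" by (simp add: algebra_simps)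
      thus ?thesis using key' p9 p10 by linarith
    qed
    show ?thesis
    proof (cases "a \<ge> 2 * \<epsilon>")
      case True
      hence "max (a - 2 * \<epsilon>) 0 = a - 2 * \<epsilon>" by simp
      thus ?thesis using a'b rhs_nn by simp
    next
      case False
      hence "(1 - l) * (a - 2 * \<epsilon>) \<le> 0" using l1 by (intro mult_nonneg_nonpos) auto
      thus ?thesis using a'b rhs_nn by simp
    qed
  next
    case False
    have q1: "(1 - l) * \<eta> \<le> (1 - l) * d" using False l1 by (intro mult_left_mono) auto
    have q2: "a' < a - \<eta> / 2"
    proof -
      have "(1 - l) * \<eta> = \<eta> - l * \<eta>" "(1 - l) * d = d - l * d" by (simp_all add: algebra_simps)
      thus ?thesis using key' q1 p3 p6 s' l0 by linarith
    qed
    show ?thesis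
    proof (cases "a' \<le> 2 * \<epsilon>")
      case True thus ?thesis using rhs_nn by simp
    next
      case False
      hence aa: "a > 2 * \<epsilon>" using q2 \<eta> by linarith
      hence "max (a - 2 * \<epsilon>) 0 = a - 2 * \<epsilon>" by simp
      moreover have "(1 - l) * (a - 2 * \<epsilon>) = a - 2 * \<epsilon> - l * a + 2 * (l * \<epsilon>)" by (simp add: algebra_simps)
      ultimately have r: "(1 - l) * max (a - 2 * \<epsilon>) 0 = a - 2 * \<epsilon> - l * a + 2 * (l * \<epsilon>)" by simp
      have lft: "max (a' - 2 * \<epsilon>) 0 = a' - 2 * \<epsilon>" using False by simp
      have p11: "0 \<le> l * \<eta>" using l0 \<eta> by simp
      show ?thesis unfolding r lft using q2 p4 p8 s' l0 \<eta> p11 by linarith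
    qed
  qed
qed

theorem theorem4:
  fixes D :: "'a::{real_inner, complete_space} set"
    and T :: "nat \<Rightarrow> 'a \<Rightarrow> 'a"
    and m N :: nat
    and S :: "nat \<Rightarrow> nat list set \<times> (nat list \<Rightarrow> real)"
    and lam :: "nat \<Rightarrow> real"
    and u x0 :: 'a
    and x :: "nat \<Rightarrow> 'a"
  assumes "m \<ge> 1" and "D \<noteq> {}" and "closed D" and "convex D"
    and "\<And>i. i \<in> {1..m} \<Longrightarrow> T i ` D \<subseteq> D"
    and "\<And>i. i \<in> {1..m} \<Longrightarrow> firmly_nonexpansive_on D (T i)"
    and "(\<Inter>i\<in>{1..m}. Fix D (T i)) \<noteq> {}"
    and "N \<ge> 1"
    and "inj_on S {1..N}"
    and "\<And>r. r \<in> {1..N} \<Longrightarrow> S r \<in> calM m"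
    and "steering_sequence lam"
    and "u \<in> D" and "x0 \<in> D"
    and "x 0 = x0"
    and "\<And>k. x (Suc k) = lam k *\<^sub>R u + (1 - lam k) *\<^sub>R
           (\<Sum>t\<in>fst (S (k mod N + 1)). snd (S (k mod N + 1)) t *\<^sub>R string_op T t (x k))"
  shows "x \<longlonglongrightarrow> metric_proj (\<Inter>i\<in>{1..m}. Fix D (T i)) u"
proof -
  define F where "F = (\<Inter>i\<in>{1..m}. Fix D (T i))"
  have TD: "\<And>i. i \<in> {1..m} \<Longrightarrow> T i ` D \<subseteq> D" by (rule assms(5))
  have fne: "\<And>i. i \<in> {1..m} \<Longrightarrow> firmly_nonexpansive_on D (T i)" by (rule assms(6))
  have ne: "\<And>i a b. i \<in> {1..m} \<Longrightarrow> a \<in> D \<Longrightarrow> b \<in> D \<Longrightarrow> norm (T i a - T i b) \<le> norm (a - b)"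
    using fne_nonexp fne by blast
  have Fcl: "closed F" unfolding F_def
  proof (rule closed_INT, intro ballI)
    fix i assume i: "i \<in> {1..m}"
    show "closed (Fix D (T i))" by (rule fix_closed) (use assms(3) ne i in auto)
  qed
  have Fcv: "convex F" unfolding F_def
  proof (rule convex_INT)
    fix i assume i: "i \<in> {1..m}"
    show "convex (Fix D (T i))" by (rule fix_convex) (use assms(4) ne TD i in auto)
  qed
  have Fne: "F \<noteq> {}" using assms(7) unfolding F_def .
  define p where "p = metric_proj F u"
  have pF: "p \<in> F" using proj_exists[OF Fcl Fcv Fne, of u] unfolding p_def by blast
  have one: "1 \<in> {1..m}" using assms(1) by simp
  have pD: "p \<in> D" using pF one unfolding F_def Fix_def by blast
  have Tp: "\<And>i. i \<in> {1..m} \<Longrightarrow> T i p = p" using pF unfolding F_def Fix_def by blast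
  have VI: "\<And>q. q \<in> F \<Longrightarrow> inner (u - p) (q - p) \<le> 0" unfolding p_def by (rule proj_vi[OF Fcl Fcv Fne])
  define v where "v = u - p"
  define Sr where "Sr k = S (k mod N + 1)" for k
  have Srin: "k mod N + 1 \<in> {1..N}" for k using assms(8) by (simp add: Suc_leI)
  have SrM: "Sr k \<in> calM m" for k unfolding Sr_def by (rule assms(10)[OF Srin])
  define U where "U k = Uop T (Sr k) (x k)" for k
  have xrec: "x (Suc k) = lam k *\<^sub>R u + (1 - lam k) *\<^sub>R U k" for k
    unfolding U_def Uop_def Sr_def by (rule assms(15))
  have lam01: "\<And>k. 0 \<le> lam k \<and> lam k \<le> 1" and lam0: "lam \<longlonglongrightarrow> 0" and lamns: "\<not> summable lam"
    using assms(11) unfolding steering_sequence_def by auto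
  have UP: "Uop T (Sr k) y \<in> D \<and> (norm (Uop T (Sr k) y - p))\<^sup>2 \<le> (norm (y - p))\<^sup>2 \<and>
    (norm (Uop T (Sr k) y - y))\<^sup>2 \<le> Ucst (Sr k) * ((norm (y - p))\<^sup>2 - (norm (Uop T (Sr k) y - p))\<^sup>2) \<and>
    (\<forall>i\<in>{1..m}. (norm (y - T i y))\<^sup>2 \<le> Ucst (Sr k) * ((norm (y - p))\<^sup>2 - (norm (Uop T (Sr k) y - p))\<^sup>2))"
    if "y \<in> D" for k y
    by (rule U_props) (use TD fne pD Tp assms(4) SrM that in auto)
  have xD: "x k \<in> D" for k
  proof (induction k)
    case 0 thus ?case using assms(13,14) by simp
  next
    case (Suc k)
    have "U k \<in> D" using UP[OF Suc] unfolding U_def by blast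
    thus ?case unfolding xrec using assms(4) assms(12) lam01[of k] by (intro convexD) auto
  qed
  have UPk: "U k \<in> D \<and> (norm (U k - p))\<^sup>2 \<le> (norm (x k - p))\<^sup>2 \<and>
    (norm (U k - x k))\<^sup>2 \<le> Ucst (Sr k) * ((norm (x k - p))\<^sup>2 - (norm (U k - p))\<^sup>2) \<and>
    (\<forall>i\<in>{1..m}. (norm (x k - T i (x k)))\<^sup>2 \<le> Ucst (Sr k) * ((norm (x k - p))\<^sup>2 - (norm (U k - p))\<^sup>2))" for k
    unfolding U_def by (rule UP[OF xD])
  define \<delta> where "\<delta> k = (norm (x k - p))\<^sup>2 - (norm (U k - p))\<^sup>2" for k
  have d0: "0 \<le> \<delta> k" for k using UPk[of k] unfolding \<delta>_def by simp
  define CC where "CC = (\<Sum>r\<in>{1..N}. Ucst (S r))"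
  have Ucst0: "0 \<le> Ucst Sr'" if "Sr' \<in> calM m" for Sr'
  proof -
    obtain \<Omega> w where Sr: "Sr' = (\<Omega>, w)" by (cases Sr')
    have "\<And>t. t \<in> \<Omega> \<Longrightarrow> 0 < w t" using that unfolding Sr calM_def by auto
    thus ?thesis unfolding Ucst_def Sr by (auto intro!: sum_nonneg simp: less_imp_le)
  qed
  have CCk: "Ucst (Sr k) \<le> CC" for k
    unfolding CC_def Sr_def using Srin[of k] assms(10) Ucst0 by (intro member_le_sum) auto
  have bT: "(norm (x k - T i (x k)))\<^sup>2 \<le> CC * \<delta> k" if "i \<in> {1..m}" for i k
  proof -
    have "(norm (x k - T i (x k)))\<^sup>2 \<le> Ucst (Sr k) * \<delta> k" using UPk[of k] that unfolding \<delta>_def by blast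
    also have "\<dots> \<le> CC * \<delta> k" using CCk d0 by (intro mult_right_mono) auto
    finally show ?thesis .
  qed
  have bU: "(norm (U k - x k))\<^sup>2 \<le> CC * \<delta> k" for k
  proof -
    have "(norm (U k - x k))\<^sup>2 \<le> Ucst (Sr k) * \<delta> k" using UPk[of k] unfolding \<delta>_def by blast
    also have "\<dots> \<le> CC * \<delta> k" using CCk d0 by (intro mult_right_mono) auto
    finally show ?thesis .
  qed
  have Up_le: "norm (U k - p) \<le> norm (x k - p)" for k
  proof -
    have "(norm (U k - p))\<^sup>2 \<le> (norm (x k - p))\<^sup>2" using UPk[of k] by blast
    thus ?thesis by (rule power2_le_imp_le) simp
  qed
  define R where "R = max (norm (x0 - p)) (norm (u - p))"
  have xp: "x (Suc k) - p = lam k *\<^sub>R v + (1 - lam k) *\<^sub>R (U k - p)" for k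
    unfolding xrec v_def by (simp add: algebra_simps)
  have bd: "norm (x k - p) \<le> R" for k
  proof (induction k)
    case 0 thus ?case using assms(14) unfolding R_def by simp
  next
    case (Suc k)
    have l: "0 \<le> lam k" "lam k \<le> 1" using lam01 by auto
    have "norm (x (Suc k) - p) \<le> norm (lam k *\<^sub>R v) + norm ((1 - lam k) *\<^sub>R (U k - p))"
      unfolding xp by (rule norm_triangle_ineq)
    also have "\<dots> = lam k * norm v + (1 - lam k) * norm (U k - p)" using l by simp
    also have "\<dots> \<le> lam k * R + (1 - lam k) * R"
    proof (intro add_mono mult_left_mono)
      show "norm v \<le> R" unfolding v_def R_def by simp
      show "norm (U k - p) \<le> R" using Up_le[of k] Suc by linarith
    qed (use l in auto)
    also have "\<dots> = R" by (simp add: algebra_simps)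
    finally show ?case .
  qed
  have vR: "norm v \<le> R" unfolding v_def R_def by simp
  have R0: "0 \<le> R" unfolding R_def by (rule order_trans[OF norm_ge_zero max.cobounded1])
  define s where "s k = (norm (x k - p))\<^sup>2" for k
  have key: "s (Suc k) \<le> (1 - lam k) * (s k - \<delta> k) + 2 * lam k * inner v (x (Suc k) - p)" for k
  proof -
    have l: "0 \<le> lam k" "lam k \<le> 1" using lam01 by auto
    define a where "a = (1 - lam k) *\<^sub>R (U k - p)"
    define b where "b = lam k *\<^sub>R v"
    have ab: "x (Suc k) - p = a + b" unfolding a_def b_def xp by simp
    have e1: "(norm (a + b))\<^sup>2 = (norm a)\<^sup>2 + 2 * inner b (a + b) - (norm b)\<^sup>2"
      unfolding power2_norm_eq_inner by (simp add: inner_add_left inner_add_right inner_commute)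
    have na: "norm a = (1 - lam k) * norm (U k - p)" unfolding a_def using l by simp
    have "(norm a)\<^sup>2 = (1 - lam k) * ((1 - lam k) * (norm (U k - p))\<^sup>2)"
      unfolding na by (simp add: power_mult_distrib power2_eq_square)
    also have "\<dots> \<le> (1 - lam k) * (1 * (norm (U k - p))\<^sup>2)"
      using l by (intro mult_left_mono mult_right_mono) auto
    also have "\<dots> = (1 - lam k) * (s k - \<delta> k)" unfolding s_def \<delta>_def by simp
    finally have na2: "(norm a)\<^sup>2 \<le> (1 - lam k) * (s k - \<delta> k)" .
    have ib: "inner b (a + b) = lam k * inner v (x (Suc k) - p)" using ab by (simp add: b_def)
    have "s (Suc k) = (norm (a + b))\<^sup>2" unfolding s_def ab ..
    moreover have "0 \<le> (norm b)\<^sup>2" by simp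
    ultimately show ?thesis using e1 na2 ib by linarith
  qed
  have lamk: "0 \<le> lam k" "lam k \<le> 1" for k using lam01 by auto
  have xdiff: "x (Suc k) - x k = lam k *\<^sub>R (u - U k) + (U k - x k)" for k
    unfolding xrec by (simp add: algebra_simps)
  have uU: "norm (u - U k) \<le> 2 * R" for k
  proof -
    have "norm (u - U k) \<le> norm (u - p) + norm (U k - p)"
      by (rule norm_diff_triangle_le[where y=p]) (auto simp: norm_minus_commute)
    moreover have "norm (u - p) \<le> R" unfolding R_def by simp
    moreover have "norm (U k - p) \<le> R" using Up_le[of k] bd[of k] by linarith
    ultimately show ?thesis by linarith
  qed
  have claimC: "\<exists>\<eta>>0. \<exists>K. \<forall>k\<ge>K. \<delta> k \<le> \<eta> \<longrightarrow> inner v (x (Suc k) - p) \<le> \<epsilon>" if \<epsilon>: "\<epsilon> > 0" for \<epsilon>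
  proof (rule ccontr)
    assume "\<not> (\<exists>\<eta>>0. \<exists>K. \<forall>k\<ge>K. \<delta> k \<le> \<eta> \<longrightarrow> inner v (x (Suc k) - p) \<le> \<epsilon>)"
    hence H: "\<And>\<eta> K. \<eta> > 0 \<Longrightarrow> \<exists>k\<ge>K. \<delta> k \<le> \<eta> \<and> inner v (x (Suc k) - p) > \<epsilon>"
      by (auto simp: not_le)
    have "\<forall>n. \<exists>k\<ge>n. \<delta> k \<le> 1 / Suc n \<and> inner v (x (Suc k) - p) > \<epsilon>"
      using H by simp
    then obtain kk where kk1: "\<And>n. kk n \<ge> n" and kk2: "\<And>n. \<delta> (kk n) \<le> 1 / Suc n"
      and kk3: "\<And>n. inner v (x (Suc (kk n)) - p) > \<epsilon>" by metis
    define y where "y n = x (Suc (kk n))" for n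
    have inv0: "(\<lambda>n. 1 / real (Suc n)) \<longlonglongrightarrow> 0"
      using LIMSEQ_inverse_real_of_nat by (simp add: inverse_eq_divide)
    have dl: "(\<lambda>n. \<delta> (kk n)) \<longlonglongrightarrow> 0"
      by (rule Lim_null_comparison[OF _ inv0]) (use kk2 d0 in auto)
    have "(\<lambda>n. CC * \<delta> (kk n)) \<longlonglongrightarrow> CC * 0" by (intro tendsto_intros dl)
    hence "(\<lambda>n. sqrt (CC * \<delta> (kk n))) \<longlonglongrightarrow> sqrt (CC * 0)" by (rule tendsto_real_sqrt)
    hence sq: "(\<lambda>n. sqrt (CC * \<delta> (kk n))) \<longlonglongrightarrow> 0" by simp
    have lT: "(\<lambda>n. norm (x (kk n) - T i (x (kk n)))) \<longlonglongrightarrow> 0" if i: "i \<in> {1..m}" for i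
    proof (rule Lim_null_comparison[OF _ sq], intro always_eventually allI)
      fix n show "norm (norm (x (kk n) - T i (x (kk n)))) \<le> sqrt (CC * \<delta> (kk n))"
        using bT[OF i, of "kk n"] by (simp add: real_le_rsqrt)
    qed
    have lU: "(\<lambda>n. norm (U (kk n) - x (kk n))) \<longlonglongrightarrow> 0"
    proof (rule Lim_null_comparison[OF _ sq], intro always_eventually allI)
      fix n show "norm (norm (U (kk n) - x (kk n))) \<le> sqrt (CC * \<delta> (kk n))"
        using bU[of "kk n"] by (simp add: real_le_rsqrt)
    qed
    have ll: "(\<lambda>n. lam (kk n)) \<longlonglongrightarrow> 0" by (rule lim_sub[OF lam0 kk1])
    have "(\<lambda>n. lam (kk n) * (2 * R) + norm (U (kk n) - x (kk n))) \<longlonglongrightarrow> 0 * (2 * R) + 0"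
      by (intro tendsto_intros ll lU)
    hence g1: "(\<lambda>n. lam (kk n) * (2 * R) + norm (U (kk n) - x (kk n))) \<longlonglongrightarrow> 0" by simp
    have lyx: "(\<lambda>n. norm (y n - x (kk n))) \<longlonglongrightarrow> 0"
    proof (rule Lim_null_comparison[OF _ g1], intro always_eventually allI)
      fix n
      have "norm (y n - x (kk n)) \<le> norm (lam (kk n) *\<^sub>R (u - U (kk n))) + norm (U (kk n) - x (kk n))"
        unfolding y_def xdiff by (rule norm_triangle_ineq)
      also have "\<dots> = lam (kk n) * norm (u - U (kk n)) + norm (U (kk n) - x (kk n))"
        using lamk[of "kk n"] by simp
      also have "\<dots> \<le> lam (kk n) * (2 * R) + norm (U (kk n) - x (kk n))"
        using uU[of "kk n"] lamk[of "kk n"] by (simp add: mult_left_mono)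
      finally show "norm (norm (y n - x (kk n))) \<le> lam (kk n) * (2 * R) + norm (U (kk n) - x (kk n))" by simp
    qed
    have yD: "\<And>n. y n \<in> D" unfolding y_def using xD by blast
    have ly: "(\<lambda>n. norm (y n - T i (y n))) \<longlonglongrightarrow> 0" if i: "i \<in> {1..m}" for i
    proof -
      have "(\<lambda>n. 2 * norm (y n - x (kk n)) + norm (x (kk n) - T i (x (kk n)))) \<longlonglongrightarrow> 2 * 0 + 0"
        by (intro tendsto_intros lyx lT[OF i])
      hence g: "(\<lambda>n. 2 * norm (y n - x (kk n)) + norm (x (kk n) - T i (x (kk n)))) \<longlonglongrightarrow> 0" by simp
      show ?thesis
      proof (rule Lim_null_comparison[OF _ g], intro always_eventually allI)
        fix n
        have n1: "norm (T i (x (kk n)) - T i (y n)) \<le> norm (x (kk n) - y n)"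
          by (rule ne[OF i]) (use xD yD in auto)
        have t1: "norm (x (kk n) - T i (y n)) \<le> norm (x (kk n) - T i (x (kk n))) + norm (T i (x (kk n)) - T i (y n))"
          by (rule norm_diff_triangle_le[where y="T i (x (kk n))"]) auto
        have "norm (y n - T i (y n)) \<le> norm (y n - x (kk n)) + norm (x (kk n) - T i (y n))"
          by (rule norm_diff_triangle_le[where y="x (kk n)"]) auto
        thus "norm (norm (y n - T i (y n))) \<le> 2 * norm (y n - x (kk n)) + norm (x (kk n) - T i (x (kk n)))"
          using t1 n1 by (simp add: norm_minus_commute)
      qed
    qed
    have ybd: "\<And>n. norm (y n) \<le> R + norm p"
    proof -
      fix n have "norm (y n) \<le> norm (y n - p) + norm p" using norm_triangle_ineq[of "y n - p" p] by simp
      thus "norm (y n) \<le> R + norm p" using bd[of "Suc (kk n)"] unfolding y_def by linarith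
    qed
    have ge: "\<epsilon> + inner v p \<le> inner v (y n)" for n
      using kk3[of n] unfolding y_def by (simp add: inner_diff_right)
    have "\<exists>c \<in> (\<Inter>i\<in>{1..m}. Fix D (T i)). \<epsilon> + inner v p \<le> inner v c"
      by (rule demi[where y=y and B="R + norm p"]; use assms(3,4) TD ne yD ybd ly ge in blast)
    then obtain c where cF: "c \<in> F" and cv: "\<epsilon> + inner v p \<le> inner v c" unfolding F_def by blast
    have "inner (u - p) (c - p) \<le> 0" by (rule VI[OF cF])
    thus False using cv \<epsilon> unfolding v_def[symmetric] by (simp add: inner_diff_right)
  qed
  have sR: "s k \<le> R\<^sup>2" for k unfolding s_def using bd[of k] by (intro power_mono) auto
  have s0: "0 \<le> s k" for k unfolding s_def by simp
  have bR: "inner v (x (Suc k) - p) \<le> R\<^sup>2" for k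
  proof -
    have "inner v (x (Suc k) - p) \<le> norm v * norm (x (Suc k) - p)" by (rule norm_cauchy_schwarz)
    also have "\<dots> \<le> R * R" using vR bd[of "Suc k"] R0 by (intro mult_mono) auto
    finally show ?thesis by (simp add: power2_eq_square)
  qed
  have lim: "x \<longlonglongrightarrow> p" unfolding LIMSEQ_def
  proof (intro allI impI)
    fix e :: real assume e: "e > 0"
    define \<epsilon> where "\<epsilon> = e\<^sup>2 / 3"
    have \<epsilon>0: "\<epsilon> > 0" unfolding \<epsilon>_def using e by simp
    obtain \<eta> K1 where \<eta>: "\<eta> > 0" and K1: "\<And>k. k \<ge> K1 \<Longrightarrow> \<delta> k \<le> \<eta> \<Longrightarrow> inner v (x (Suc k) - p) \<le> \<epsilon>"
      using claimC[OF \<epsilon>0] by blast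
    have "(\<lambda>k. lam k * (\<eta> + 2 * R\<^sup>2 + 1)) \<longlonglongrightarrow> 0 * (\<eta> + 2 * R\<^sup>2 + 1)" by (intro tendsto_intros lam0)
    hence "(\<lambda>k. lam k * (\<eta> + 2 * R\<^sup>2 + 1)) \<longlonglongrightarrow> 0" by simp
    moreover have "\<eta> / 2 > 0" using \<eta> by simp
    ultimately obtain K2 where K2: "\<And>k. k \<ge> K2 \<Longrightarrow> \<bar>lam k * (\<eta> + 2 * R\<^sup>2 + 1)\<bar> < \<eta> / 2"
      unfolding LIMSEQ_def dist_real_def by (metis diff_zero)
    define t where "t k = max (s k - 2 * \<epsilon>) 0" for k
    have trec: "t (Suc k) \<le> (1 - lam k) * t k" if k: "k \<ge> max K1 K2" for k
      unfolding t_def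
    proof (rule step_real[where d="\<delta> k" and bb="inner v (x (Suc k) - p)" and RR="R\<^sup>2" and \<eta>=\<eta>])
      show "0 \<le> lam k" "lam k \<le> 1" by (rule lamk)+
      show "0 \<le> s k" "s k \<le> R\<^sup>2" "0 \<le> \<delta> k" by (rule s0, rule sR, rule d0)
      show "inner v (x (Suc k) - p) \<le> R\<^sup>2" by (rule bR)
      show "s (Suc k) \<le> (1 - lam k) * (s k - \<delta> k) + 2 * lam k * inner v (x (Suc k) - p)" by (rule key)
      show "lam k * (\<eta> + 2 * R\<^sup>2 + 1) < \<eta> / 2" using K2[of k] k by auto
      show "\<eta> > 0" "\<epsilon> > 0" by (rule \<eta>, rule \<epsilon>0)
      show "\<delta> k \<le> \<eta> \<Longrightarrow> inner v (x (Suc k) - p) \<le> \<epsilon>" using K1[of k] k by auto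
    qed
    have "t \<longlonglongrightarrow> 0"
      by (rule decay[where K="max K1 K2"]) (use lam01 lamns trec in \<open>auto simp: t_def\<close>)
    then obtain K3 where K3: "\<And>k. k \<ge> K3 \<Longrightarrow> \<bar>t k\<bar> < \<epsilon>"
      using \<epsilon>0 unfolding LIMSEQ_def dist_real_def by (metis diff_zero)
    have "dist (x k) p < e" if k: "k \<ge> K3" for k
    proof -
      have "s k - 2 * \<epsilon> < \<epsilon>" using K3[OF k] unfolding t_def by linarith
      hence "(norm (x k - p))\<^sup>2 < e\<^sup>2" unfolding s_def \<epsilon>_def by simp
      hence "norm (x k - p) < e" by (rule power2_less_imp_less) (use e in simp)
      thus ?thesis by (simp add: dist_norm)
    qed
    thus "\<exists>K. \<forall>k\<ge>K. dist (x k) p < e" by blast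
  qed
  thus ?thesis unfolding p_def F_def .
qed

end
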